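(* Let $G$ be a signed digraph on $[n]$. If no vertex of $G$ has exactly one unsigned in-neighbor, or if every vertex of $G$ has at least one unsigned in-neighbor, then $G$ admits a nilpotent function $f:\{0,1,2\}^n\to\{0,1,2\}^n$ of class at most $2$.
   Context: A signed digraph is a digraph (loops allowed, no multiple arcs) in which each arc is labeled positive, negative, or null (unsigned). An unsigned in-neighbor of $i$ is a vertex $j$ such that $(j,i)$ is an unsigned (null) arc. For a finite interval of integers $A$, a function over $A$ is a map $f:A^n\to A^n$; $f^0=\mathrm{id}$, $f^k=f\circ f^{k-1}$. The interaction graph $G(f)$ is the signed digraph on $[n]$ with an arc $(j,i)$ iff $f_i(a)\neq f_i(b)$ for some $a,b\in A^n$ with $a_j<b_j$ and $a_\ell=b_\ell$ for $\ell\neq j$; the arc is positive if $f_i(a)\leq f_i(b)$ for all such pairs, negative if $f_i(a)\geq f_i(b)$ for all such pairs, and null otherwise. $G$ admits $f$ if $G(f)=G$. $f$ is nilpotent if $f^k$ is constant for some $k\geq 0$; the least such $k$ is its class. *)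

theory Defs
  imports Main
begin

text \<open>Vertices are 0..<n (representing [n]). The alphabet is the interval
{0..<q} (for the theorem q = 3, i.e. {0,1,2}). A configuration in A^n is a
function x :: nat \<Rightarrow> nat with x i < q for i < n and x i = 0 for i \<ge> n.\<close>

definition cfg :: "nat \<Rightarrow> nat \<Rightarrow> (nat \<Rightarrow> nat) set" where
  "cfg q n = {x. (\<forall>i<n. x i < q) \<and> (\<forall>i\<ge>n. x i = 0)}"

datatype sign = Pos | Neg | Unsigned

text \<open>A signed digraph on [n]: G (j,i) = Some s iff there is an arc (j,i) with label s.\<close>
definition signed_digraph_on :: "nat \<Rightarrow> (nat \<times> nat \<Rightarrow> sign option) \<Rightarrow> bool" where
  "signed_digraph_on n G \<longleftrightarrow> (\<forall>j i. G (j,i) \<noteq> None \<longrightarrow> j < n \<and> i < n)"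

definition unsigned_in_neighbors :: "(nat \<times> nat \<Rightarrow> sign option) \<Rightarrow> nat \<Rightarrow> nat set" where
  "unsigned_in_neighbors G i = {j. G (j,i) = Some Unsigned}"

definition jpair :: "nat \<Rightarrow> nat \<Rightarrow> nat \<Rightarrow> (nat \<Rightarrow> nat) \<Rightarrow> (nat \<Rightarrow> nat) \<Rightarrow> bool" where
  "jpair q n j a b \<longleftrightarrow> a \<in> cfg q n \<and> b \<in> cfg q n \<and> a j < b j \<and> (\<forall>l. l \<noteq> j \<longrightarrow> a l = b l)"

definition interaction_graph ::
  "nat \<Rightarrow> nat \<Rightarrow> ((nat \<Rightarrow> nat) \<Rightarrow> (nat \<Rightarrow> nat)) \<Rightarrow> (nat \<times> nat \<Rightarrow> sign option)" where
  "interaction_graph q n f = (\<lambda>(j,i).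
     if j < n \<and> i < n \<and> (\<exists>a b. jpair q n j a b \<and> f a i \<noteq> f b i)
     then Some (if \<forall>a b. jpair q n j a b \<longrightarrow> f a i \<le> f b i then Pos
                else if \<forall>a b. jpair q n j a b \<longrightarrow> f a i \<ge> f b i then Neg
                else Unsigned)
     else None)"

definition is_function_over :: "nat \<Rightarrow> nat \<Rightarrow> ((nat \<Rightarrow> nat) \<Rightarrow> (nat \<Rightarrow> nat)) \<Rightarrow> bool" where
  "is_function_over q n f \<longleftrightarrow> (\<forall>x \<in> cfg q n. f x \<in> cfg q n)"

definition iterate_constant :: "nat \<Rightarrow> nat \<Rightarrow> ((nat \<Rightarrow> nat) \<Rightarrow> (nat \<Rightarrow> nat)) \<Rightarrow> nat \<Rightarrow> bool" where
  "iterate_constant q n f k \<longleftrightarrow> (\<exists>c. \<forall>x \<in> cfg q n. (f ^^ k) x = c)"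

definition nilpotent_class_le :: "nat \<Rightarrow> nat \<Rightarrow> ((nat \<Rightarrow> nat) \<Rightarrow> (nat \<Rightarrow> nat)) \<Rightarrow> nat \<Rightarrow> bool" where
  "nilpotent_class_le q n f m \<longleftrightarrow> (\<exists>k \<le> m. iterate_constant q n f k)"

end

theory Submission
  imports Defs
begin

lemma ig_eq:
  fixes cond :: "nat \<Rightarrow> (nat\<Rightarrow>nat) \<Rightarrow> bool" and c :: nat
  assumes sd: "signed_digraph_on n G" and c: "c>0"
  and f: "\<And>x. f x = (\<lambda>i. if i<n \<and> cond i x then c else 0)"
  and H0: "\<And>i j a b. i<n \<Longrightarrow> j<n \<Longrightarrow> G(j,i)=None \<Longrightarrow> jpair 3 n j a b \<Longrightarrow> cond i a = cond i b"
  and HP: "\<And>i j a b. G(j,i)=Some Pos \<Longrightarrow> jpair 3 n j a b \<Longrightarrow> cond i a \<Longrightarrow> cond i b"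
  and HP': "\<And>i j. G(j,i)=Some Pos \<Longrightarrow> \<exists>a b. jpair 3 n j a b \<and> \<not>cond i a \<and> cond i b"
  and HN: "\<And>i j a b. G(j,i)=Some Neg \<Longrightarrow> jpair 3 n j a b \<Longrightarrow> cond i b \<Longrightarrow> cond i a"
  and HN': "\<And>i j. G(j,i)=Some Neg \<Longrightarrow> \<exists>a b. jpair 3 n j a b \<and> cond i a \<and> \<not> cond i b"
  and HU1: "\<And>i j. G(j,i)=Some Unsigned \<Longrightarrow> \<exists>a b. jpair 3 n j a b \<and> \<not>cond i a \<and> cond i b"
  and HU2: "\<And>i j. G(j,i)=Some Unsigned \<Longrightarrow> \<exists>a b. jpair 3 n j a b \<and> cond i a \<and> \<not> cond i b"
  shows "interaction_graph 3 n f = G"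
proof (rule ext, clarify)
  fix j i
  show "interaction_graph 3 n f (j,i) = G(j,i)"
  proof (cases "G(j,i)")
    case None
    then show ?thesis using H0[of i j] unfolding interaction_graph_def f by auto
  next
    case (Some s)
    then have ij: "j<n" "i<n" using sd unfolding signed_digraph_on_def by auto
    show ?thesis
    proof (cases s)
      case Pos
      from HP'[of j i] Some Pos obtain a b where ab: "jpair 3 n j a b" "\<not>cond i a" "cond i b" by auto
      have dep: "\<exists>a b. jpair 3 n j a b \<and> f a i \<noteq> f b i"
        using ab c ij by (intro exI[of _ a] exI[of _ b]) (simp add: f)
      have mono: "\<forall>a b. jpair 3 n j a b \<longrightarrow> f a i \<le> f b i"
        using HP[of j i] Some Pos by (auto simp: f)
      show ?thesis using dep mono ij Some Pos by (simp add: interaction_graph_def)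
    next
      case Neg
      from HN'[of j i] Some Neg obtain a b where ab: "jpair 3 n j a b" "cond i a" "\<not>cond i b" by auto
      have dep: "\<exists>a b. jpair 3 n j a b \<and> f a i \<noteq> f b i"
        using ab c ij by (intro exI[of _ a] exI[of _ b]) (simp add: f)
      have "jpair 3 n j a b \<and> \<not> f a i \<le> f b i" using ab c ij by (simp add: f)
      then have nmono: "\<not>(\<forall>a b. jpair 3 n j a b \<longrightarrow> f a i \<le> f b i)" by blast
      have mono: "\<forall>a b. jpair 3 n j a b \<longrightarrow> f a i \<ge> f b i"
        using HN[of j i] Some Neg by (auto simp: f)
      show ?thesis using dep mono nmono ij Some Neg by (simp add: interaction_graph_def)
    next
      case Unsigned
      from HU1[of j i] Some Unsigned obtain a b where ab: "jpair 3 n j a b" "\<not>cond i a" "cond i b" by auto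
      from HU2[of j i] Some Unsigned obtain a' b' where ab': "jpair 3 n j a' b'" "cond i a'" "\<not>cond i b'" by auto
      have dep: "\<exists>a b. jpair 3 n j a b \<and> f a i \<noteq> f b i"
        using ab c ij by (intro exI[of _ a] exI[of _ b]) (simp add: f)
      have "jpair 3 n j a' b' \<and> \<not> f a' i \<le> f b' i" using ab' c ij by (simp add: f)
      then have nmono: "\<not>(\<forall>a b. jpair 3 n j a b \<longrightarrow> f a i \<le> f b i)" by blast
      have "jpair 3 n j a b \<and> \<not> f a i \<ge> f b i" using ab c ij by (simp add: f)
      then have nmono2: "\<not>(\<forall>a b. jpair 3 n j a b \<longrightarrow> f a i \<ge> f b i)" by blast
      show ?thesis using dep nmono nmono2 ij Some Unsigned by (simp add: interaction_graph_def)
    qed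
  qed
qed

lemma jpair_facts:
  assumes "jpair 3 n j a b"
  shows "j < n" "a j < b j" "b j < 3" "\<And>l. l \<noteq> j \<Longrightarrow> a l = b l"
    "a \<in> cfg 3 n" "b \<in> cfg 3 n"
proof -
  show jn: "j < n"
  proof (rule ccontr)
    assume "\<not> j < n"
    then have "b j = 0" using assms by (auto simp: jpair_def cfg_def)
    then show False using assms by (auto simp: jpair_def)
  qed
  show "b j < 3" using assms jn unfolding jpair_def cfg_def by auto
qed (use assms in \<open>auto simp: jpair_def\<close>)

definition cond2 :: "(nat \<times> nat \<Rightarrow> sign option) \<Rightarrow> nat \<Rightarrow> (nat \<Rightarrow> nat) \<Rightarrow> bool" where
  "cond2 G i x \<longleftrightarrow> (\<forall>p. G(p,i) = Some Pos \<longrightarrow> x p = 2) \<and> (\<forall>q. G(q,i) = Some Neg \<longrightarrow> x q = 0)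
      \<and> (\<forall>u. G(u,i) = Some Unsigned \<longrightarrow> x u = 1)"

definition w2 :: "nat \<Rightarrow> (nat \<times> nat \<Rightarrow> sign option) \<Rightarrow> nat \<Rightarrow> nat \<Rightarrow> nat" where
  "w2 n G i = (\<lambda>k. if k < n then (if G(k,i) = Some Pos then 2 else if G(k,i) = Some Unsigned then 1 else 0) else 0)"

lemma w2_cfg: "w2 n G i \<in> cfg 3 n" "v < 3 \<Longrightarrow> j < n \<Longrightarrow> (w2 n G i)(j := v) \<in> cfg 3 n"
  unfolding w2_def cfg_def by auto

lemma w2_cond: "signed_digraph_on n G \<Longrightarrow> cond2 G i (w2 n G i)"
  unfolding w2_def cond2_def signed_digraph_on_def by force

lemma jpair_upd: "a \<in> cfg 3 n \<Longrightarrow> b \<in> cfg 3 n \<Longrightarrow> a j < b j \<Longrightarrow> (\<And>l. l \<noteq> j \<Longrightarrow> a l = b l) \<Longrightarrow> jpair 3 n j a b"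
  unfolding jpair_def by auto

lemma case2:
  assumes sd: "signed_digraph_on n G"
    and U: "\<forall>i<n. card (unsigned_in_neighbors G i) \<ge> 1"
  shows "\<exists>f. is_function_over 3 n f \<and> interaction_graph 3 n f = G \<and> nilpotent_class_le 3 n f 2"
proof -
  define f where "f x = (\<lambda>i. if i<n \<and> cond2 G i x then 2 else (0::nat))" for x
  have dom: "\<And>j i. G(j,i) \<noteq> None \<Longrightarrow> j < n \<and> i < n" using sd unfolding signed_digraph_on_def by auto
  have fo: "is_function_over 3 n f" unfolding is_function_over_def f_def cfg_def by auto
  have ig: "interaction_graph 3 n f = G"
  proof (rule ig_eq[OF sd, of 2 f "cond2 G"])
    show "\<And>x. f x = (\<lambda>i. if i < n \<and> cond2 G i x then 2 else 0)" by (simp add: f_def)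
  next
    fix i j a b assume "G (j, i) = None" "jpair 3 n j a b"
    then have "\<And>l. G(l,i) \<noteq> None \<Longrightarrow> a l = b l" using jpair_facts(4)[of n j a b] by metis
    then show "cond2 G i a = cond2 G i b" unfolding cond2_def by auto
  next
    fix i j a b assume "G (j, i) = Some Pos" "jpair 3 n j a b" "cond2 G i a"
    then show "cond2 G i b" using jpair_facts[of n j a b] unfolding cond2_def by force
  next
    fix i j a b assume "G (j, i) = Some Neg" "jpair 3 n j a b" "cond2 G i b"
    then show "cond2 G i a" using jpair_facts[of n j a b] unfolding cond2_def by force
  next
    fix i j assume G: "G (j, i) = Some Pos"
    let ?w = "w2 n G i"
    have "jpair 3 n j (?w(j:=0)) ?w" using G dom[of j i]
      by (intro jpair_upd w2_cfg) (auto simp: w2_def)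
    moreover have "\<not> cond2 G i (?w(j:=0))" using G unfolding cond2_def by auto
    ultimately show "\<exists>a b. jpair 3 n j a b \<and> \<not> cond2 G i a \<and> cond2 G i b" using w2_cond[OF sd] by blast
  next
    fix i j assume G: "G (j, i) = Some Neg"
    let ?w = "w2 n G i"
    have "jpair 3 n j ?w (?w(j:=2))" using G dom[of j i]
      by (intro jpair_upd w2_cfg) (auto simp: w2_def)
    moreover have "\<not> cond2 G i (?w(j:=2))" using G unfolding cond2_def by auto
    ultimately show "\<exists>a b. jpair 3 n j a b \<and> cond2 G i a \<and> \<not> cond2 G i b" using w2_cond[OF sd] by blast
  next
    fix i j assume G: "G (j, i) = Some Unsigned"
    let ?w = "w2 n G i"
    have "jpair 3 n j (?w(j:=0)) ?w" using G dom[of j i]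
      by (intro jpair_upd w2_cfg) (auto simp: w2_def)
    moreover have "\<not> cond2 G i (?w(j:=0))" using G unfolding cond2_def by auto
    ultimately show "\<exists>a b. jpair 3 n j a b \<and> \<not> cond2 G i a \<and> cond2 G i b" using w2_cond[OF sd] by blast
  next
    fix i j assume G: "G (j, i) = Some Unsigned"
    let ?w = "w2 n G i"
    have "jpair 3 n j ?w (?w(j:=2))" using G dom[of j i]
      by (intro jpair_upd w2_cfg) (auto simp: w2_def)
    moreover have "\<not> cond2 G i (?w(j:=2))" using G unfolding cond2_def by auto
    ultimately show "\<exists>a b. jpair 3 n j a b \<and> cond2 G i a \<and> \<not> cond2 G i b" using w2_cond[OF sd] by blast
  qed simp
  have z: "f y = (\<lambda>_. 0)" if y: "\<forall>k. y k \<noteq> 1" for y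
  proof
    fix i show "f y i = 0"
    proof (cases "i < n")
      case True
      then have "card (unsigned_in_neighbors G i) \<ge> 1" using U by auto
      then obtain u where "G(u,i) = Some Unsigned" unfolding unsigned_in_neighbors_def
        by (metis (mono_tags, lifting) card.empty Collect_empty_eq not_one_le_zero)
      then show ?thesis using y unfolding f_def cond2_def by auto
    qed (simp add: f_def)
  qed
  have "iterate_constant 3 n f 2" unfolding iterate_constant_def
  proof (rule exI[of _ "\<lambda>_. 0"], intro ballI)
    fix x
    have "\<forall>k. f x k \<noteq> 1" by (simp add: f_def)
    then show "(f ^^ 2) x = (\<lambda>_. 0)" using z by (simp add: numeral_2_eq_2)
  qed
  then show ?thesis using fo ig unfolding nilpotent_class_le_def by blast
qed

definition cond1 :: "(nat \<times> nat \<Rightarrow> sign option) \<Rightarrow> nat \<Rightarrow> (nat \<Rightarrow> nat) \<Rightarrow> bool" where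
  "cond1 G i x \<longleftrightarrow> (\<forall>p. G(p,i) = Some Pos \<longrightarrow> x p = 2) \<and> (\<forall>q. G(q,i) = Some Neg \<longrightarrow> x q \<noteq> 2)
      \<and> (unsigned_in_neighbors G i = {} \<or> card {u \<in> unsigned_in_neighbors G i. x u = 2} = 1)"

definition w1 :: "nat \<Rightarrow> (nat \<times> nat \<Rightarrow> sign option) \<Rightarrow> nat \<Rightarrow> nat \<Rightarrow> nat" where
  "w1 n G i = (\<lambda>k. if k < n \<and> G(k,i) = Some Pos then 2 else 0)"

lemma w1_cfg: "w1 n G i \<in> cfg 3 n"
  "x \<in> cfg 3 n \<Longrightarrow> v < 3 \<Longrightarrow> j < n \<Longrightarrow> x(j := v) \<in> cfg 3 n"
  unfolding w1_def cfg_def by auto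

lemma case1:
  assumes sd: "signed_digraph_on n G"
    and U: "\<forall>i<n. card (unsigned_in_neighbors G i) \<noteq> 1"
  shows "\<exists>f. is_function_over 3 n f \<and> interaction_graph 3 n f = G \<and> nilpotent_class_le 3 n f 2"
proof -
  define f where "f x = (\<lambda>i. if i<n \<and> cond1 G i x then 1 else (0::nat))" for x
  have dom: "\<And>j i. G(j,i) \<noteq> None \<Longrightarrow> j < n \<and> i < n" using sd unfolding signed_digraph_on_def by auto
  have domS: "\<And>j i s. G(j,i) = Some s \<Longrightarrow> j < n \<and> i < n" using dom by blast
  have fin: "finite (unsigned_in_neighbors G i)" for i
  proof -
    have "unsigned_in_neighbors G i \<subseteq> {..<n}" using dom unfolding unsigned_in_neighbors_def by auto
    then show ?thesis using finite_subset by blast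
  qed
  have fo: "is_function_over 3 n f" unfolding is_function_over_def f_def cfg_def by auto
  have base: "\<exists>s. s \<in> cfg 3 n \<and> (\<forall>t. cond1 G i (s(j:=t)) \<longleftrightarrow>
      ((G(j,i) = Some Pos \<longrightarrow> t = 2) \<and> (G(j,i) = Some Neg \<longrightarrow> t \<noteq> 2)))"
    if G: "G(j,i) = Some Pos \<or> G(j,i) = Some Neg" for i j
  proof (cases "unsigned_in_neighbors G i = {}")
    case True
    let ?s = "w1 n G i"
    have "cond1 G i (?s(j:=t)) \<longleftrightarrow> ((G(j,i) = Some Pos \<longrightarrow> t = 2) \<and> (G(j,i) = Some Neg \<longrightarrow> t \<noteq> 2))" for t
      using True dom G unfolding cond1_def w1_def by auto
    then show ?thesis using w1_cfg by blast
  next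
    case False
    then obtain u0 where u0: "G(u0,i) = Some Unsigned" unfolding unsigned_in_neighbors_def by auto
    let ?s = "(w1 n G i)(u0 := 2)"
    have sc: "?s \<in> cfg 3 n" using w1_cfg dom[of u0 i] u0 by auto
    have uj: "u0 \<noteq> j" using u0 G by auto
    have st: "{u \<in> unsigned_in_neighbors G i. (?s(j:=t)) u = 2} = {u0}" for t
      using u0 uj G unfolding unsigned_in_neighbors_def w1_def by auto
    have "cond1 G i (?s(j:=t)) \<longleftrightarrow> ((G(j,i) = Some Pos \<longrightarrow> t = 2) \<and> (G(j,i) = Some Neg \<longrightarrow> t \<noteq> 2))" for t
      using dom G u0 uj unfolding cond1_def st by (auto simp: w1_def)
    then show ?thesis using sc by blast
  qed
  have ig: "interaction_graph 3 n f = G"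
  proof (rule ig_eq[OF sd, of 1 f "cond1 G"])
    show "\<And>x. f x = (\<lambda>i. if i < n \<and> cond1 G i x then 1 else 0)" by (simp add: f_def)
  next
    fix i j a b assume "G (j, i) = None" "jpair 3 n j a b"
    then have ab: "\<And>l. G(l,i) \<noteq> None \<Longrightarrow> a l = b l" using jpair_facts(4)[of n j a b] by metis
    then have "{u \<in> unsigned_in_neighbors G i. a u = 2} = {u \<in> unsigned_in_neighbors G i. b u = 2}"
      unfolding unsigned_in_neighbors_def by auto
    then show "cond1 G i a = cond1 G i b" using ab unfolding cond1_def by auto
  next
    fix i j a b assume "G (j, i) = Some Pos" "jpair 3 n j a b" "cond1 G i a"
    then show "cond1 G i b" using jpair_facts[of n j a b] unfolding cond1_def by force
  next
    fix i j a b assume G: "G (j, i) = Some Neg" and jp: "jpair 3 n j a b" and cb: "cond1 G i b"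
    have ab: "\<And>l. l \<noteq> j \<Longrightarrow> a l = b l" using jpair_facts(4)[OF jp] by blast
    have "{u \<in> unsigned_in_neighbors G i. a u = 2} = {u \<in> unsigned_in_neighbors G i. b u = 2}"
      unfolding unsigned_in_neighbors_def
    proof (intro Collect_cong)
      fix u show "(u \<in> {j. G (j, i) = Some Unsigned} \<and> a u = 2) = (u \<in> {j. G (j, i) = Some Unsigned} \<and> b u = 2)"
        using G ab[of u] by (cases "u = j") auto
    qed
    moreover have "a j \<noteq> 2" using jpair_facts[OF jp] by auto
    moreover have "\<forall>p. G(p,i) = Some Pos \<longrightarrow> a p = 2"
    proof (intro allI impI)
      fix p assume "G(p,i) = Some Pos"
      then show "a p = 2" using cb G ab[of p] unfolding cond1_def by (cases "p = j") auto
    qed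
    moreover have "\<forall>q. G(q,i) = Some Neg \<longrightarrow> a q \<noteq> 2"
    proof (intro allI impI)
      fix q assume "G(q,i) = Some Neg"
      then show "a q \<noteq> 2" using cb \<open>a j \<noteq> 2\<close> ab[of q] unfolding cond1_def by (cases "q = j") auto
    qed
    ultimately show "cond1 G i a" using cb unfolding cond1_def by simp
  next
    fix i j assume G: "G (j, i) = Some Pos"
    obtain s where s: "s \<in> cfg 3 n" "\<forall>t. cond1 G i (s(j:=t)) \<longleftrightarrow>
      ((G(j,i) = Some Pos \<longrightarrow> t = 2) \<and> (G(j,i) = Some Neg \<longrightarrow> t \<noteq> 2))"
      using base[of j i] G by blast
    have jn: "j < n" using dom[of j i] G by auto
    have "jpair 3 n j (s(j:=0)) (s(j:=2))" using s jn by (intro jpair_upd w1_cfg) auto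
    moreover have "\<not> cond1 G i (s(j:=0))" "cond1 G i (s(j:=2))" using G s(2) by auto
    ultimately show "\<exists>a b. jpair 3 n j a b \<and> \<not> cond1 G i a \<and> cond1 G i b" by blast
  next
    fix i j assume G: "G (j, i) = Some Neg"
    obtain s where s: "s \<in> cfg 3 n" "\<forall>t. cond1 G i (s(j:=t)) \<longleftrightarrow>
      ((G(j,i) = Some Pos \<longrightarrow> t = 2) \<and> (G(j,i) = Some Neg \<longrightarrow> t \<noteq> 2))"
      using base[of j i] G by blast
    have jn: "j < n" using dom[of j i] G by auto
    have "jpair 3 n j (s(j:=0)) (s(j:=2))" using s jn by (intro jpair_upd w1_cfg) auto
    moreover have "cond1 G i (s(j:=0))" "\<not> cond1 G i (s(j:=2))" using G s(2) by auto
    ultimately show "\<exists>a b. jpair 3 n j a b \<and> cond1 G i a \<and> \<not> cond1 G i b" by blast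
  next
    fix i j assume G: "G (j, i) = Some Unsigned"
    let ?w = "w1 n G i"
    have jn: "j < n" using dom[of j i] G by auto
    have ne: "unsigned_in_neighbors G i \<noteq> {}" using G unfolding unsigned_in_neighbors_def by auto
    have "jpair 3 n j ?w (?w(j:=2))" using G jn by (intro jpair_upd w1_cfg) (auto simp: w1_def)
    moreover have e: "{u \<in> unsigned_in_neighbors G i. ?w u = 2} = {}"
      unfolding unsigned_in_neighbors_def w1_def by auto
    have c1: "\<not> cond1 G i ?w" using ne unfolding cond1_def e by simp
    moreover have e2: "{u \<in> unsigned_in_neighbors G i. (?w(j:=2)) u = 2} = {j}"
      using G unfolding unsigned_in_neighbors_def w1_def by auto
    have c2: "cond1 G i (?w(j:=2))" using G unfolding cond1_def e2 by (auto simp: w1_def dest: domS)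
    ultimately show "\<exists>a b. jpair 3 n j a b \<and> \<not> cond1 G i a \<and> cond1 G i b" using c1 c2 by blast
  next
    fix i j assume G: "G (j, i) = Some Unsigned"
    have jn: "j < n" "i < n" using dom[of j i] G by auto
    have ju: "j \<in> unsigned_in_neighbors G i" using G unfolding unsigned_in_neighbors_def by auto
    have "unsigned_in_neighbors G i \<noteq> {j}" using U jn by auto
    then obtain u' where u': "G(u',i) = Some Unsigned" "u' \<noteq> j" using ju unfolding unsigned_in_neighbors_def by blast
    have un: "u' < n" using dom[of u' i] u' by auto
    let ?a = "(w1 n G i)(u' := 2)"
    let ?b = "?a(j := 2)"
    have ac: "?a \<in> cfg 3 n" using w1_cfg un by auto
    have "jpair 3 n j ?a ?b" using G jn u' ac un by (intro jpair_upd w1_cfg) (auto simp: w1_def)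
    moreover have e1: "{u \<in> unsigned_in_neighbors G i. ?a u = 2} = {u'}"
      using u' unfolding unsigned_in_neighbors_def w1_def by auto
    have c1: "cond1 G i ?a" using u' G unfolding cond1_def e1 by (auto simp: w1_def dest: domS)
    have e2: "{u \<in> unsigned_in_neighbors G i. ?b u = 2} = {u', j}"
      using u' G unfolding unsigned_in_neighbors_def w1_def by auto
    have c2: "\<not> cond1 G i ?b" using u' G ju unfolding cond1_def e2 by auto
    ultimately show "\<exists>a b. jpair 3 n j a b \<and> cond1 G i a \<and> \<not> cond1 G i b" using c1 c2 by blast
  qed simp
  have z: "f y = f (\<lambda>_. 0)" if y: "\<forall>k. y k \<noteq> 2" for y
  proof -
    have "cond1 G i y = cond1 G i (\<lambda>_. 0)" for i
      using y unfolding cond1_def by auto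
    then show ?thesis unfolding f_def by simp
  qed
  have "iterate_constant 3 n f 2" unfolding iterate_constant_def
  proof (rule exI[of _ "f (\<lambda>_. 0)"], intro ballI)
    fix x
    have "\<forall>k. f x k \<noteq> 2" by (simp add: f_def)
    then have "f (f x) = f (\<lambda>_. 0)" by (rule z)
    then show "(f ^^ 2) x = f (\<lambda>_. 0)" by (simp add: numeral_2_eq_2)
  qed
  then show ?thesis using fo ig unfolding nilpotent_class_le_def by blast
qed

theorem proposition6:
  fixes n :: nat and G :: "nat \<times> nat \<Rightarrow> sign option"
  assumes "signed_digraph_on n G"
    and "(\<forall>i<n. card (unsigned_in_neighbors G i) \<noteq> 1)
         \<or> (\<forall>i<n. card (unsigned_in_neighbors G i) \<ge> 1)"
  shows "\<exists>f. is_function_over 3 n f \<and> interaction_graph 3 n f = G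
             \<and> nilpotent_class_le 3 n f 2"
  using assms case1 case2 by blast

end
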